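(* Consider $\mathbb{Z}^2$ with standard generating set $\{a,b\}$, $a=(1,0)$, $b=(0,1)$. Let $D\subseteq\{a,b,a^{-1},b^{-1}\}$ with $|D|\in\{2,3\}$. Then the infinite snake problem for $(\mathbb{Z}^2,\{a,b\})$ restricted to directions in $D$ is decidable.
   Context: A tileset graph for $(\mathbb{Z}^2,\{a,b\})$ is a finite multigraph $\Gamma=(A,B)$ whose edges are triples $(t,t',s)$ with $t,t'\in A$, $s\in\{a,b,a^{-1},b^{-1}\}$, such that $(t,t',s)\in B$ implies $(t',t,s^{-1})\in B$. A bi-infinite $\Gamma$-snake is a pair $(\omega,\zeta)$, $\omega:\mathbb{Z}\to\mathbb{Z}^2$ injective, $\zeta:\mathbb{Z}\to A$, with $d\omega_i:=\omega(i+1)-\omega(i)\in\{a,b,a^{-1},b^{-1}\}$ and $(\zeta(i),\zeta(i+1),d\omega_i)\in B$ for all $i$. The problem restricted to directions in $D$: given $\Gamma$, decide whether there is a bi-infinite $\Gamma$-snake with $d\omega_i\in D$ for all $i\in\mathbb{Z}$. *)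

theory Defs
  imports Main "HOL-Library.Nat_Bijection" "HOL-Library.Product_Plus"
begin

type_synonym z2 = "int \<times> int"

definition gen_a :: z2 where "gen_a = (1, 0)"
definition gen_b :: z2 where "gen_b = (0, 1)"

definition gens :: "z2 set" where
  "gens = {gen_a, gen_b, - gen_a, - gen_b}"

text \<open>Tiles are natural numbers; an edge is a triple (t, t', s).
  Multiplicities of edges are irrelevant for the existence of snakes,
  so the edge multiset is represented by its set.\<close>
type_synonym tile = nat
type_synonym edge = "tile \<times> tile \<times> z2"

definition tileset_graph :: "tile set \<Rightarrow> edge set \<Rightarrow> bool" where
  "tileset_graph A B \<longleftrightarrow> finite A \<and> finite B \<and>
     (\<forall>(t, t', s) \<in> B. t \<in> A \<and> t' \<in> A \<and> s \<in> gens) \<and>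
     (\<forall>t t' s. (t, t', s) \<in> B \<longrightarrow> (t', t, - s) \<in> B)"

definition has_snake_in :: "z2 set \<Rightarrow> tile set \<Rightarrow> edge set \<Rightarrow> bool" where
  "has_snake_in D A B \<longleftrightarrow>
     (\<exists>(\<omega> :: int \<Rightarrow> z2) (\<zeta> :: int \<Rightarrow> tile).
        inj \<omega> \<and> (\<forall>i. \<zeta> i \<in> A) \<and>
        (\<forall>i. \<omega> (i + 1) - \<omega> i \<in> gens \<and> \<omega> (i + 1) - \<omega> i \<in> D) \<and>
        (\<forall>i. (\<zeta> i, \<zeta> (i + 1), \<omega> (i + 1) - \<omega> i) \<in> B))"

datatype recf =
    Zero
  | Succ
  | Proj nat
  | Comp recf "recf list"
  | PrimRec recf recf
  | Minim recf

inductive rec_eval :: "recf \<Rightarrow> nat list \<Rightarrow> nat \<Rightarrow> bool" where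
  zero: "rec_eval Zero xs 0"
| succ: "rec_eval Succ [x] (Suc x)"
| proj: "i < length xs \<Longrightarrow> rec_eval (Proj i) xs (xs ! i)"
| comp: "list_all2 (\<lambda>g y. rec_eval g xs y) gs ys \<Longrightarrow> rec_eval f ys z
           \<Longrightarrow> rec_eval (Comp f gs) xs z"
| pr0: "rec_eval f xs y \<Longrightarrow> rec_eval (PrimRec f g) (0 # xs) y"
| prS: "rec_eval (PrimRec f g) (x # xs) y \<Longrightarrow> rec_eval g (x # y # xs) z
           \<Longrightarrow> rec_eval (PrimRec f g) (Suc x # xs) z"
| mn: "rec_eval f (y # xs) 0 \<Longrightarrow> (\<forall>k<y. \<exists>v. rec_eval f (k # xs) v \<and> 0 < v)
           \<Longrightarrow> rec_eval (Minim f) xs y"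

definition dir_of :: "nat \<Rightarrow> z2" where
  "dir_of d = (if d = 0 then gen_a else if d = 1 then gen_b
               else if d = 2 then - gen_a else - gen_b)"

definition edges_of :: "(nat \<times> nat \<times> nat) list \<Rightarrow> edge set" where
  "edges_of es = (\<lambda>(t, t', d). (t, t', dir_of d)) ` set es"

definition encode_instance :: "nat list \<Rightarrow> (nat \<times> nat \<times> nat) list \<Rightarrow> nat" where
  "encode_instance ts es =
     prod_encode (list_encode ts,
                  list_encode (map (\<lambda>(t, t', d). prod_encode (t, prod_encode (t', d))) es))"

definition snake_problem_decidable :: "z2 set \<Rightarrow> bool" where
  "snake_problem_decidable D \<longleftrightarrow>
     (\<exists>p. \<forall>ts es. (\<forall>(t, t', d) \<in> set es. d < 4) \<longrightarrow>
                  tileset_graph (set ts) (edges_of es) \<longrightarrow>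
                  rec_eval p [encode_instance ts es]
                    (if has_snake_in D (set ts) (edges_of es) then 1 else 0))"

end

theory Submission
  imports Defs
begin

definition rf :: "recf \<Rightarrow> nat \<Rightarrow> (nat list \<Rightarrow> nat) \<Rightarrow> bool" where
  "rf p n F \<longleftrightarrow> (\<forall>xs. length xs = n \<longrightarrow> rec_eval p xs (F xs))"

lemma rfI: "(\<And>xs. length xs = n \<Longrightarrow> rec_eval p xs (F xs)) \<Longrightarrow> rf p n F"
  by (simp add: rf_def)

lemma rfD: "rf p n F \<Longrightarrow> length xs = n \<Longrightarrow> rec_eval p xs (F xs)"
  by (simp add: rf_def)

lemma rf_cong: "rf p n F \<Longrightarrow> (\<And>xs. length xs = n \<Longrightarrow> F xs = H xs) \<Longrightarrow> rf p n H"
  by (simp add: rf_def)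

lemma rf_zero: "rf Zero n (\<lambda>_. 0)"
  by (simp add: rf_def rec_eval.zero)

lemma rf_proj: "i < n \<Longrightarrow> rf (Proj i) n (\<lambda>xs. xs ! i)"
  by (simp add: rf_def rec_eval.proj)

lemma rf_succ: "rf Succ 1 (\<lambda>xs. Suc (xs ! 0))"
  unfolding rf_def
proof (intro allI impI)
  fix xs :: "nat list" assume "length xs = 1"
  then obtain x where "xs = [x]" by (metis One_nat_def length_0_conv length_Suc_conv)
  then show "rec_eval Succ xs (Suc (xs ! 0))" by (simp add: rec_eval.succ)
qed

lemma rf_comp:
  assumes "rf f (length gs) F" and "list_all2 (\<lambda>g G. rf g n G) gs Gs"
  shows "rf (Comp f gs) n (\<lambda>xs. F (map (\<lambda>G. G xs) Gs))"
  unfolding rf_def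
proof (intro allI impI)
  fix xs :: "nat list" assume l: "length xs = n"
  have "list_all2 (\<lambda>g y. rec_eval g xs y) gs (map (\<lambda>G. G xs) Gs)"
    using assms(2) l by (induction rule: list_all2_induct) (auto simp: rf_def)
  moreover have "length (map (\<lambda>G. G xs) Gs) = length gs"
    using assms(2) by (simp add: list_all2_lengthD)
  ultimately show "rec_eval (Comp f gs) xs (F (map (\<lambda>G. G xs) Gs))"
    using assms(1) rec_eval.comp[of xs gs "map (\<lambda>G. G xs) Gs" f] by (simp add: rf_def)
qed

lemma rf_comp1: "rf f 1 F \<Longrightarrow> rf g n G \<Longrightarrow> rf (Comp f [g]) n (\<lambda>xs. F [G xs])"
  using rf_comp[of f "[g]" F n "[G]"] by simp

lemma rf_comp2: "rf f 2 F \<Longrightarrow> rf g n G \<Longrightarrow> rf h n H \<Longrightarrow>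
   rf (Comp f [g, h]) n (\<lambda>xs. F [G xs, H xs])"
  using rf_comp[of f "[g, h]" F n "[G, H]"] by (simp add: numeral_2_eq_2)

primrec prfn :: "(nat list \<Rightarrow> nat) \<Rightarrow> (nat list \<Rightarrow> nat) \<Rightarrow> nat \<Rightarrow> nat list \<Rightarrow> nat" where
  "prfn F G 0 xs = F xs"
| "prfn F G (Suc x) xs = G (x # prfn F G x xs # xs)"

lemma rf_prim:
  assumes "rf f n F" "rf g (Suc (Suc n)) G"
  shows "rf (PrimRec f g) (Suc n) (\<lambda>xs. prfn F G (hd xs) (tl xs))"
  unfolding rf_def
proof (intro allI impI)
  fix xs :: "nat list" assume "length xs = Suc n"
  then obtain x ys where xs: "xs = x # ys" "length ys = n" by (cases xs) auto
  have "rec_eval (PrimRec f g) (x # ys) (prfn F G x ys)"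
  proof (induction x)
    case 0 then show ?case using assms(1) xs(2) by (simp add: rf_def rec_eval.pr0)
  next
    case (Suc x)
    have "rec_eval g (x # prfn F G x ys # ys) (G (x # prfn F G x ys # ys))"
      using assms(2) xs(2) by (simp add: rf_def)
    then show ?case using rec_eval.prS[OF Suc.IH] by simp
  qed
  then show "rec_eval (PrimRec f g) xs (prfn F G (hd xs) (tl xs))" using xs by simp
qed

lemma rf_minim:
  assumes "rf f (Suc n) F" and "\<And>xs. length xs = n \<Longrightarrow> \<exists>y. F (y # xs) = 0"
  shows "rf (Minim f) n (\<lambda>xs. LEAST y. F (y # xs) = 0)"
  unfolding rf_def
proof (intro allI impI)
  fix xs :: "nat list" assume l: "length xs = n"
  define y where "y = (LEAST y. F (y # xs) = 0)"
  obtain y0 where "F (y0 # xs) = 0" using assms(2)[OF l] by blast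
  then have F0: "F (y # xs) = 0" unfolding y_def by (rule LeastI)
  have npos: "\<not> F (k # xs) = 0" if "k < y" for k using that unfolding y_def by (rule not_less_Least)
  have pos: "\<And>k. k < y \<Longrightarrow> F (k # xs) > 0" using npos by simp
  have ev: "\<And>k. rec_eval f (k # xs) (F (k # xs))"
    using assms(1) l by (simp add: rf_def)
  show "rec_eval (Minim f) xs y"
  proof (rule rec_eval.mn)
    show "rec_eval f (y # xs) 0" using ev[of y] F0 by simp
    show "\<forall>k<y. \<exists>v. rec_eval f (k # xs) v \<and> 0 < v" using ev pos by blast
  qed
qed

primrec cnst :: "nat \<Rightarrow> recf" where
  "cnst 0 = Zero"
| "cnst (Suc k) = Comp Succ [cnst k]"

lemma rf_cnst: "rf (cnst k) n (\<lambda>_. k)"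
proof (induction k)
  case 0 then show ?case by (simp add: rf_zero)
next
  case (Suc k) then show ?case using rf_comp1[OF rf_succ Suc] by simp
qed

lemma rf_prim':
  assumes "0 < m" "rf f (m - 1) F" "rf g (Suc m) G"
  shows "rf (PrimRec f g) m (\<lambda>xs. prfn F G (hd xs) (tl xs))"
  using rf_prim[of f "m - 1" F g G] assms by simp

lemma rf_comp3: "rf f 3 F \<Longrightarrow> rf g n G \<Longrightarrow> rf h n H \<Longrightarrow> rf k n K \<Longrightarrow>
   rf (Comp f [g, h, k]) n (\<lambda>xs. F [G xs, H xs, K xs])"
  using rf_comp[of f "[g, h, k]" F n "[G, H, K]"] by (simp add: numeral_3_eq_3)

lemma rf_prim_eq:
  assumes "0 < m" "rf f (m - 1) F" "rf g (Suc m) G"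
    "\<And>xs. length xs = m - 1 \<Longrightarrow> H (0 # xs) = F xs"
    "\<And>x xs. length xs = m - 1 \<Longrightarrow> H (Suc x # xs) = G (x # H (x # xs) # xs)"
  shows "rf (PrimRec f g) m H"
proof (rule rf_cong[OF rf_prim'[OF assms(1-3)]])
  fix xs :: "nat list" assume lm: "length xs = m"
  obtain x ys where xs1: "xs = x # ys" using lm assms(1) by (cases xs) auto
  then have xs: "xs = x # ys" "length ys = m - 1" using lm by auto
  have "prfn F G x ys = H (x # ys)"
  proof (induction x)
    case 0 show ?case using assms(4)[OF xs(2)] by simp
  next
    case (Suc x) show ?case using assms(5)[OF xs(2), of x] Suc.IH by simp
  qed
  then show "prfn F G (hd xs) (tl xs) = H xs" using xs by simp
qed

declare cnst.simps[simp del]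
declare nth_Cons_pos[simp]

named_theorems rfi
declare rf_prim'[rfi] rf_comp1[rfi] rf_comp2[rfi] rf_comp3[rfi] rf_proj[rfi] rf_succ[rfi]
  rf_zero[rfi] rf_cnst[rfi]

definition "p_add = PrimRec (Proj 0) (Comp Succ [Proj 1])"

lemma rf_add[rfi]: "rf p_add 2 (\<lambda>xs. xs ! 0 + xs ! 1)"
  unfolding p_add_def by (rule rf_prim_eq, (rule rfi | simp)+)

definition "p_pred = PrimRec Zero (Proj 0)"

lemma rf_pred[rfi]: "rf p_pred 1 (\<lambda>xs. xs ! 0 - 1)"
  unfolding p_pred_def by (rule rf_prim_eq, (rule rfi | simp)+)

definition "p_rsub = PrimRec (Proj 0) (Comp p_pred [Proj 1])"

lemma rf_rsub[rfi]: "rf p_rsub 2 (\<lambda>xs. xs ! 1 - xs ! 0)"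
  unfolding p_rsub_def by (rule rf_prim_eq, (rule rfi | simp)+)

definition "p_sub = Comp p_rsub [Proj 1, Proj 0]"

lemma rf_sub[rfi]: "rf p_sub 2 (\<lambda>xs. xs ! 0 - xs ! 1)"
  unfolding p_sub_def by (rule rf_cong, (rule rfi | simp)+)

definition "p_mul = PrimRec Zero (Comp p_add [Proj 1, Proj 2])"

lemma rf_mul[rfi]: "rf p_mul 2 (\<lambda>xs. xs ! 0 * xs ! 1)"
  unfolding p_mul_def by (rule rf_prim_eq, (rule rfi | simp)+)

definition "p_isz = Comp p_sub [cnst 1, Proj 0]"

lemma rf_isz[rfi]: "rf p_isz 1 (\<lambda>xs. if xs ! 0 = 0 then 1 else 0)"
  unfolding p_isz_def by (rule rf_cong, (rule rfi | simp)+)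

definition "p_sg = Comp p_isz [p_isz]"

lemma rf_sg[rfi]: "rf p_sg 1 (\<lambda>xs. if xs ! 0 = 0 then 0 else 1)"
  unfolding p_sg_def by (rule rf_cong, (rule rfi | simp)+)

definition "p_eq = Comp p_isz [Comp p_add [p_sub, p_rsub]]"

lemma rf_eq[rfi]: "rf p_eq 2 (\<lambda>xs. if xs ! 0 = xs ! 1 then 1 else 0)"
  unfolding p_eq_def by (rule rf_cong, (rule rfi | simp)+)

definition "p_pow2 = PrimRec (cnst 1) (Comp p_add [Proj 1, Proj 1])"

lemma rf_pow2[rfi]: "rf p_pow2 1 (\<lambda>xs. 2 ^ (xs ! 0))"
  unfolding p_pow2_def by (rule rf_prim_eq, (rule rfi | simp)+)

definition "p_divf = Comp p_sub [Comp Succ [Proj 1], Comp p_mul [Comp Succ [Proj 0], Comp p_pow2 [Proj 2]]]"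

lemma rf_divf: "rf p_divf (Suc 2) (\<lambda>xs. Suc (xs ! 1) - Suc (xs ! 0) * 2 ^ (xs ! 2))"
  unfolding p_divf_def by (rule rf_cong, (rule rfi | simp)+)

lemma least_div: "(LEAST y. Suc x - Suc y * 2 ^ i = 0) = x div (2 ^ i :: nat)"
proof (rule Least_equality)
  have m: "x mod 2 ^ i < 2 ^ i" by simp
  have "x < 2 ^ i + x div 2 ^ i * 2 ^ i" using m div_mult_mod_eq[of x "2 ^ i"] by linarith
  then have "x < Suc (x div 2 ^ i) * 2 ^ i" by simp
  then show "Suc x - Suc (x div 2 ^ i) * 2 ^ i = 0" by simp
next
  fix y assume "Suc x - Suc y * 2 ^ i = 0"
  then have "x < Suc y * 2 ^ i" by simp
  then have "x div 2 ^ i < Suc y" by (rule less_mult_imp_div_less)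
  then show "x div 2 ^ i \<le> y" by simp
qed

definition "p_divp = Minim p_divf"

lemma rf_divp[rfi]: "rf p_divp 2 (\<lambda>xs. xs ! 0 div 2 ^ (xs ! 1))"
proof -
  have "rf p_divp 2 (\<lambda>xs. LEAST y. Suc (xs ! 0) - Suc y * 2 ^ (xs ! 1) = 0)"
    unfolding p_divp_def
  proof (rule rf_cong[OF rf_minim[OF rf_divf]])
    fix xs :: "nat list"
    show "\<exists>y. Suc ((y # xs) ! 1) - Suc ((y # xs) ! 0) * 2 ^ ((y # xs) ! 2) = 0"
    proof (rule exI[of _ "xs ! 0"])
      have "Suc (xs ! 0) * 1 \<le> Suc (xs ! 0) * 2 ^ (xs ! 1)"
        by (rule mult_le_mono2) simp
      then show "Suc ((xs ! 0 # xs) ! 1) - Suc ((xs ! 0 # xs) ! 0) * 2 ^ ((xs ! 0 # xs) ! 2) = 0"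
        by simp
    qed
  qed simp
  then show ?thesis by (rule rf_cong) (simp only: least_div)
qed

definition "p_bit = Comp p_sub [p_divp, Comp p_mul [cnst 2, Comp p_divp [Proj 0, Comp Succ [Proj 1]]]]"

lemma rf_bit[rfi]: "rf p_bit 2 (\<lambda>xs. xs ! 0 div 2 ^ (xs ! 1) mod 2)"
  unfolding p_bit_def
  apply (rule rf_cong, (rule rfi | simp)+)
  subgoal for xs
  proof -
    have "xs ! 0 div (2 * 2 ^ xs ! 1) = xs ! 0 div 2 ^ xs ! 1 div 2"
      by (subst mult.commute) (rule div_mult2_eq)
    then show ?thesis by (simp add: minus_div_mult_eq_mod[symmetric])
  qed
  done

definition "p_tri = PrimRec Zero (Comp p_add [Proj 1, Comp Succ [Proj 0]])"

lemma rf_tri[rfi]: "rf p_tri 1 (\<lambda>xs. triangle (xs ! 0))"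
  unfolding p_tri_def by (rule rf_prim_eq, (rule rfi | simp)+)

definition "p_psf = Comp p_sub [Comp Succ [Proj 1], Comp p_tri [Comp Succ [Proj 0]]]"

lemma rf_psf: "rf p_psf (Suc 1) (\<lambda>xs. Suc (xs ! 1) - triangle (Suc (xs ! 0)))"
  unfolding p_psf_def by (rule rf_cong, (rule rfi | simp)+)

lemma triangle_mono: "m \<le> n \<Longrightarrow> triangle m \<le> triangle n"
  by (induction n) (auto simp: le_Suc_eq)

lemma least_tri: "(LEAST s. Suc n - triangle (Suc s) = 0) = fst (prod_decode n) + snd (prod_decode n)"
proof -
  obtain a b where ab: "prod_decode n = (a, b)" by fastforce
  then have n: "n = triangle (a + b) + a"
    using prod_decode_inverse[of n] by (simp add: prod_encode_def)
  have "(LEAST s. Suc n - triangle (Suc s) = 0) = a + b"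
  proof (rule Least_equality)
    show "Suc n - triangle (Suc (a + b)) = 0" using n by simp
  next
    fix y assume "Suc n - triangle (Suc y) = 0"
    then have "n < triangle (Suc y)" by simp
    show "a + b \<le> y"
    proof (rule ccontr)
      assume "\<not> a + b \<le> y"
      then have "triangle (Suc y) \<le> triangle (a + b)" by (intro triangle_mono) simp
      with \<open>n < triangle (Suc y)\<close> n show False by simp
    qed
  qed
  then show ?thesis using ab by simp
qed

definition "p_ps = Minim p_psf"

lemma rf_ps[rfi]: "rf p_ps 1 (\<lambda>xs. fst (prod_decode (xs ! 0)) + snd (prod_decode (xs ! 0)))"
proof -
  have "rf p_ps 1 (\<lambda>xs. LEAST y. Suc (xs ! 0) - triangle (Suc y) = 0)"
    unfolding p_ps_def
  proof (rule rf_cong[OF rf_minim[OF rf_psf]])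
    fix xs :: "nat list"
    show "\<exists>y. Suc ((y # xs) ! 1) - triangle (Suc ((y # xs) ! 0)) = 0"
      by (rule exI[of _ "xs ! 0"]) simp
  qed simp
  then show ?thesis by (rule rf_cong) (simp only: least_tri)
qed

definition "p_fst = Comp p_sub [Proj 0, Comp p_tri [p_ps]]"

lemma rf_fst[rfi]: "rf p_fst 1 (\<lambda>xs. fst (prod_decode (xs ! 0)))"
  unfolding p_fst_def
  apply (rule rf_cong, (rule rfi | simp)+)
  subgoal for xs
  proof -
    obtain a b where ab: "prod_decode (xs ! 0) = (a, b)" by fastforce
    then have n: "xs ! 0 = triangle (a + b) + a"
      using prod_decode_inverse[of "xs ! 0"] by (simp add: prod_encode_def)
    show ?thesis using ab n by simp
  qed
  done

definition "p_snd = Comp p_sub [p_ps, p_fst]"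

lemma rf_snd[rfi]: "rf p_snd 1 (\<lambda>xs. snd (prod_decode (xs ! 0)))"
  unfolding p_snd_def by (rule rf_cong, (rule rfi | simp)+)

definition "tlc n = snd (prod_decode (n - 1))"
definition "hdc n = fst (prod_decode (n - 1))"

definition "p_tl = Comp p_snd [p_pred]"
definition "p_hd = Comp p_fst [p_pred]"

lemma rf_tl[rfi]: "rf p_tl 1 (\<lambda>xs. tlc (xs ! 0))"
  unfolding p_tl_def tlc_def by (rule rf_cong, (rule rfi | simp)+)

lemma rf_hd[rfi]: "rf p_hd 1 (\<lambda>xs. hdc (xs ! 0))"
  unfolding p_hd_def hdc_def by (rule rf_cong, (rule rfi | simp)+)

definition "p_it = PrimRec (Proj 0) (Comp p_tl [Proj 1])"

lemma rf_it[rfi]: "rf p_it 2 (\<lambda>xs. (tlc ^^ (xs ! 0)) (xs ! 1))"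
  unfolding p_it_def by (rule rf_prim_eq, (rule rfi | simp)+)

definition p_bsum :: "recf \<Rightarrow> nat \<Rightarrow> recf" where
  "p_bsum f k = PrimRec Zero (Comp p_add [Proj 1, Comp f (Proj 0 # map (\<lambda>i. Proj (i + 2)) [0..<k])])"

lemma rf_bsum:
  assumes "rf f (Suc k) F"
  shows "rf (p_bsum f k) (Suc k) (\<lambda>xs. \<Sum>j<xs ! 0. F (j # tl xs))"
proof -
  have l2: "list_all2 (\<lambda>g G. rf g (Suc (Suc k)) G) (Proj 0 # map (\<lambda>i. Proj (i + 2)) [0..<k])
      ((\<lambda>xs. xs ! 0) # map (\<lambda>i xs. xs ! (i + 2)) [0..<k])"
    by (auto simp: list_all2_conv_all_nth nth_Cons' intro!: rf_proj)
  have c: "rf (Comp f (Proj 0 # map (\<lambda>i. Proj (i + 2)) [0..<k])) (Suc (Suc k))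
      (\<lambda>xs. F (map (\<lambda>G. G xs) ((\<lambda>xs. xs ! 0) # map (\<lambda>i xs. xs ! (i + 2)) [0..<k])))"
    by (rule rf_comp[OF _ l2]) (simp add: assms)
  have e: "map ((\<lambda>G. G (x # y # xs)) \<circ> (\<lambda>i xs. xs ! Suc (Suc i))) [0..<k] = xs"
    if "length xs = k" for x y xs
    using that map_nth[of xs] by (simp add: comp_def)
  show ?thesis unfolding p_bsum_def
    apply (rule rf_prim_eq)
        apply simp
       apply (rule rf_zero)
      apply (rule rf_comp2[OF rf_add rf_proj c])
    apply (simp_all add: e)
    done
qed

lemma rf_comp4: "rf f 4 F \<Longrightarrow> rf g n G \<Longrightarrow> rf h n H \<Longrightarrow> rf k n K \<Longrightarrow> rf l n LL \<Longrightarrow>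
   rf (Comp f [g, h, k, l]) n (\<lambda>xs. F [G xs, H xs, K xs, LL xs])"
  using rf_comp[of f "[g, h, k, l]" F n "[G, H, K, LL]"] by (simp add: numeral_eq_Suc)

declare rf_comp4[rfi]

definition "itv k L = (tlc ^^ k) L"
definition "nthv L j = hdc (itv j L)"
definition "validv L j = (if itv j L = 0 then 0 else 1 :: nat)"
definition "srcv L j = fst (prod_decode (nthv L j))"
definition "tgtv L j = fst (prod_decode (snd (prod_decode (nthv L j))))"
definition "dirv L j = snd (prod_decode (snd (prod_decode (nthv L j))))"
definition "inDv (cf :: nat \<Rightarrow> nat) d =
   (if d = 0 then 1 else 0) * cf 0 + (if d = 1 then 1 else 0) * cf 1 +
   ((if d = 2 then 1 else 0) * cf 2 + (if d = 3 then 1 else 0) * cf 3)"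
definition "oppv d e = (if d + 2 = e then 1 else 0) + (if e + 2 = d then 1 else (0::nat))"
definition "Rv cf L j i = validv L j * validv L i * (if tgtv L j = srcv L i then 1 else 0) *
   inDv cf (dirv L j) * inDv cf (dirv L i) * (if oppv (dirv L j) (dirv L i) = 0 then 1 else 0)"

definition "p_nth = Comp p_hd [Comp p_it [Proj 1, Proj 0]]"
lemma rf_nth[rfi]: "rf p_nth 2 (\<lambda>xs. nthv (xs ! 0) (xs ! 1))"
  unfolding p_nth_def by (rule rf_cong, (rule rfi | simp)+) (simp add: nthv_def itv_def)

definition "p_valid = Comp p_sg [Comp p_it [Proj 1, Proj 0]]"
lemma rf_valid[rfi]: "rf p_valid 2 (\<lambda>xs. validv (xs ! 0) (xs ! 1))"
  unfolding p_valid_def by (rule rf_cong, (rule rfi | simp)+) (simp add: validv_def itv_def)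

definition "p_src = Comp p_fst [p_nth]"
lemma rf_src[rfi]: "rf p_src 2 (\<lambda>xs. srcv (xs ! 0) (xs ! 1))"
  unfolding p_src_def by (rule rf_cong, (rule rfi | simp)+) (simp add: srcv_def)

definition "p_tgt = Comp p_fst [Comp p_snd [p_nth]]"
lemma rf_tgt[rfi]: "rf p_tgt 2 (\<lambda>xs. tgtv (xs ! 0) (xs ! 1))"
  unfolding p_tgt_def by (rule rf_cong, (rule rfi | simp)+) (simp add: tgtv_def)

definition "p_dir = Comp p_snd [Comp p_snd [p_nth]]"
lemma rf_dir[rfi]: "rf p_dir 2 (\<lambda>xs. dirv (xs ! 0) (xs ! 1))"
  unfolding p_dir_def by (rule rf_cong, (rule rfi | simp)+) (simp add: dirv_def)

definition "p_inD cf = Comp p_add [Comp p_add [Comp p_mul [Comp p_eq [Proj 0, cnst 0], cnst (cf 0)],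
    Comp p_mul [Comp p_eq [Proj 0, cnst 1], cnst (cf 1)]],
  Comp p_add [Comp p_mul [Comp p_eq [Proj 0, cnst 2], cnst (cf 2)],
    Comp p_mul [Comp p_eq [Proj 0, cnst 3], cnst (cf 3)]]]"
lemma rf_inD[rfi]: "rf (p_inD cf) 1 (\<lambda>xs. inDv cf (xs ! 0))"
  unfolding p_inD_def by (rule rf_cong, (rule rfi | simp)+) (simp add: inDv_def)

definition "p_opp = Comp p_add [Comp p_eq [Comp p_add [Proj 0, cnst 2], Proj 1],
   Comp p_eq [Comp p_add [Proj 1, cnst 2], Proj 0]]"
lemma rf_opp[rfi]: "rf p_opp 2 (\<lambda>xs. oppv (xs ! 0) (xs ! 1))"
  unfolding p_opp_def by (rule rf_cong, (rule rfi | simp)+) (simp add: oppv_def)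

definition "p_R cf = Comp p_mul [Comp p_mul [Comp p_mul [Comp p_mul [Comp p_mul [
    Comp p_valid [Proj 0, Proj 1], Comp p_valid [Proj 0, Proj 2]],
    Comp p_eq [Comp p_tgt [Proj 0, Proj 1], Comp p_src [Proj 0, Proj 2]]],
    Comp (p_inD cf) [Comp p_dir [Proj 0, Proj 1]]],
    Comp (p_inD cf) [Comp p_dir [Proj 0, Proj 2]]],
    Comp p_isz [Comp p_opp [Comp p_dir [Proj 0, Proj 1], Comp p_dir [Proj 0, Proj 2]]]]"
lemma rf_R[rfi]: "rf (p_R cf) 3 (\<lambda>xs. Rv cf (xs ! 0) (xs ! 1) (xs ! 2))"
  unfolding p_R_def by (rule rf_cong, (rule rfi | simp)+) (simp add: Rv_def)

definition "p_isum cf = Comp p_mul [Comp (p_R cf) [Proj 3, Proj 1, Proj 0], Comp p_bit [Proj 2, Proj 0]]"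
lemma rf_isum: "rf (p_isum cf) (Suc 3)
   (\<lambda>xs. Rv cf (xs ! 3) (xs ! 1) (xs ! 0) * (xs ! 2 div 2 ^ (xs ! 0) mod 2))"
  unfolding p_isum_def by (rule rf_cong, (rule rfi | simp)+)

definition "p_inner cf = p_bsum (p_isum cf) 3"
lemma rf_inner0: "rf (p_inner cf) (Suc 3)
   (\<lambda>xs. \<Sum>i<xs ! 0. Rv cf (xs ! 3) (xs ! 1) i * (xs ! 2 div 2 ^ i mod 2))"
  unfolding p_inner_def
  apply (rule rf_cong[OF rf_bsum[OF rf_isum]])
  subgoal for xs by (cases xs) simp_all
  done

lemma rf_inner[rfi]: "rf (p_inner cf) 4
   (\<lambda>xs. \<Sum>i<xs ! 0. Rv cf (xs ! 3) (xs ! 1) i * (xs ! 2 div 2 ^ i mod 2))"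
proof -
  have e: "Suc 3 = (4::nat)" by simp
  show ?thesis using rf_inner0[unfolded e] .
qed

definition "p_osum cf = Comp p_mul [Comp p_pow2 [Proj 0],
   Comp p_sg [Comp (p_inner cf) [Proj 2, Proj 0, Proj 1, Proj 2]]]"
lemma rf_osum: "rf (p_osum cf) (Suc 2)
   (\<lambda>xs. 2 ^ (xs ! 0) * (if (\<Sum>i<xs ! 2. Rv cf (xs ! 2) (xs ! 0) i * (xs ! 1 div 2 ^ i mod 2)) = 0
       then 0 else 1))"
  unfolding p_osum_def by (rule rf_cong, (rule rfi | simp)+)

definition stepv :: "(nat \<Rightarrow> nat) \<Rightarrow> nat \<Rightarrow> nat \<Rightarrow> nat" where "stepv cf S L = (\<Sum>j<L. 2 ^ j * (if (\<Sum>i<L. Rv cf L j i * (S div 2 ^ i mod 2)) = 0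
       then 0 else 1))"

definition "p_step cf = p_bsum (p_osum cf) 2"
lemma rf_step0: "rf (p_step cf) (Suc 2)
   (\<lambda>xs. \<Sum>j<xs ! 0. 2 ^ j * (if (\<Sum>i<xs ! 2. Rv cf (xs ! 2) j i * (xs ! 1 div 2 ^ i mod 2)) = 0
       then 0 else 1))"
  unfolding p_step_def
  apply (rule rf_cong[OF rf_bsum[OF rf_osum]])
  subgoal for xs by (cases xs) simp_all
  done

lemma rf_step[rfi]: "rf (p_step cf) 3
   (\<lambda>xs. \<Sum>j<xs ! 0. 2 ^ j * (if (\<Sum>i<xs ! 2. Rv cf (xs ! 2) j i * (xs ! 1 div 2 ^ i mod 2)) = 0
       then 0 else 1))"
proof -
  have e: "Suc 2 = (3::nat)" by simp
  show ?thesis using rf_step0[unfolded e] .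
qed

definition iterv :: "(nat \<Rightarrow> nat) \<Rightarrow> nat \<Rightarrow> nat \<Rightarrow> nat" where "iterv cf k L = ((\<lambda>S. stepv cf S L) ^^ k) (2 ^ L - 1)"

definition "p_iter cf = PrimRec (Comp p_sub [Comp p_pow2 [Proj 0], cnst 1])
   (Comp (p_step cf) [Proj 2, Proj 1, Proj 2])"
lemma rf_iter[rfi]: "rf (p_iter cf) 2 (\<lambda>xs. iterv cf (xs ! 0) (xs ! 1))"
  unfolding p_iter_def by (rule rf_prim_eq, (rule rfi | simp)+) (simp_all add: iterv_def stepv_def)

definition "mainv cf c = (if iterv cf (Suc (snd (prod_decode c))) (snd (prod_decode c)) = 0 then 0 else 1)"

definition "p_main cf = Comp p_sg [Comp (p_iter cf) [Comp Succ [Comp p_snd [Proj 0]], Comp p_snd [Proj 0]]]"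
lemma rf_main: "rf (p_main cf) 1 (\<lambda>xs. mainv cf (xs ! 0))"
  unfolding p_main_def by (rule rf_cong, (rule rfi | simp)+) (simp add: mainv_def)

definition bmask :: "(nat \<Rightarrow> nat) \<Rightarrow> nat \<Rightarrow> nat" where
  "bmask b K = (\<Sum>j<K. 2 ^ j * b j)"

lemma bmask_less: "(\<forall>j<K. b j \<le> 1) \<Longrightarrow> bmask b K < 2 ^ K"
proof (induction K)
  case 0 then show ?case by (simp add: bmask_def)
next
  case (Suc K)
  then have "bmask b K < 2 ^ K" "b K \<le> 1" by auto
  moreover have "bmask b (Suc K) = bmask b K + 2 ^ K * b K" by (simp add: bmask_def)
  ultimately show ?case
  proof -
    assume a: "bmask b K < 2 ^ K" "b K \<le> 1" "bmask b (Suc K) = bmask b K + 2 ^ K * b K"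
    have "b K = 0 \<or> b K = 1" using a(2) by auto
    then show ?case using a by auto
  qed
qed

lemma bmask_bit: "(\<forall>j<K. b j \<le> 1) \<Longrightarrow> i < K \<Longrightarrow> bmask b K div 2 ^ i mod 2 = b i"
proof (induction K)
  case 0 then show ?case by simp
next
  case (Suc K)
  have lt: "bmask b K < 2 ^ K" using Suc.prems(1) by (intro bmask_less) auto
  have eq: "bmask b (Suc K) = bmask b K + 2 ^ K * b K" by (simp add: bmask_def)
  show ?case
  proof (cases "i = K")
    case True
    have "bmask b (Suc K) div 2 ^ K = b K"
      using lt unfolding eq by (simp add: div_add1_eq)
    then show ?thesis using True Suc.prems(1) by (cases "b K = 0") auto
  next
    case False
    then have iK: "i < K" using Suc.prems(2) by simp
    obtain d where d: "K = i + Suc d" using less_imp_Suc_add[OF iK] by auto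
    have "2 ^ K * b K = 2 ^ i * (2 * 2 ^ d * b K)" unfolding d by (simp add: power_add)
    then have "bmask b (Suc K) = bmask b K + 2 ^ i * (2 * 2 ^ d * b K)" unfolding eq by simp
    also have "\<dots> div 2 ^ i = 2 * 2 ^ d * b K + bmask b K div 2 ^ i"
      by (rule div_mult_self2) simp
    finally have "bmask b (Suc K) div 2 ^ i = bmask b K div 2 ^ i + 2 * (2 ^ d * b K)"
      by simp
    then have "bmask b (Suc K) div 2 ^ i mod 2 = bmask b K div 2 ^ i mod 2" by simp
    then show ?thesis using Suc.IH Suc.prems iK by simp
  qed
qed

lemma bmask_zero: "bmask b K = 0 \<longleftrightarrow> (\<forall>j<K. b j = 0)"
  by (auto simp: bmask_def)

lemma bmask_ones: "bmask (\<lambda>_. 1) K = 2 ^ K - 1"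
proof (induction K)
  case 0 then show ?case by (simp add: bmask_def)
next
  case (Suc K)
  have "bmask (\<lambda>_. 1) (Suc K) = bmask (\<lambda>_. 1) K + 2 ^ K" by (simp add: bmask_def)
  also have "\<dots> = 2 ^ Suc K - 1"
  proof -
    have "(1::nat) \<le> 2 ^ K" by simp
    then show ?thesis using Suc.IH by simp
  qed
  finally show ?case .
qed

primrec Wk :: "(nat \<Rightarrow> nat \<Rightarrow> bool) \<Rightarrow> nat \<Rightarrow> nat \<Rightarrow> nat \<Rightarrow> bool" where
  "Wk R L 0 j = True"
| "Wk R L (Suc k) j = (\<exists>i<L. R j i \<and> Wk R L k i)"

lemma walk_extract: "Wk R L k j \<Longrightarrow> \<exists>f. f 0 = j \<and> (\<forall>l<k. R (f l) (f (Suc l)))"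
proof (induction k arbitrary: j)
  case 0 then show ?case by auto
next
  case (Suc k)
  then obtain i where i: "i < L" "R j i" "Wk R L k i" by auto
  then obtain f where f: "f 0 = i" "\<forall>l<k. R (f l) (f (Suc l))" using Suc.IH by blast
  define f' where "f' = (\<lambda>l. if l = 0 then j else f (l - 1))"
  have "\<forall>l<Suc k. R (f' l) (f' (Suc l))"
  proof (intro allI impI)
    fix l assume "l < Suc k"
    then show "R (f' l) (f' (Suc l))"
      using f i(2) by (cases l) (auto simp: f'_def)
  qed
  moreover have "f' 0 = j" by (simp add: f'_def)
  ultimately show ?case by blast
qed

lemma periodic_walk:
  assumes f: "\<forall>l<q. R (f l) (f (Suc l))" and pq: "p < q" and eq: "f p = f q"
  shows "\<exists>g::int \<Rightarrow> nat. \<forall>z. R (g z) (g (z + 1))"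
proof -
  define n where "n = q - p"
  have n0: "0 < n" using pq by (simp add: n_def)
  define g where "g z = f (p + nat (z mod int n))" for z
  have "R (g z) (g (z + 1))" for z
  proof -
    define r where "r = nat (z mod int n)"
    have rn: "r < n" using n0 by (simp add: r_def nat_less_iff)
    have zr: "z mod int n = int r" using n0 by (simp add: r_def)
    have m: "(z + 1) mod int n = (int r + 1) mod int n"
      using zr by (metis mod_add_left_eq)
    have "g (z + 1) = f (Suc (p + r))"
    proof (cases "r + 1 < n")
      case True
      then have "(int r + 1) mod int n = int (r + 1)" by simp
      then have "nat ((z + 1) mod int n) = Suc r" using m by simp
      then show ?thesis by (simp add: g_def)
    next
      case False
      then have "r + 1 = n" using rn by simp
      then have "int r + 1 = int n" by simp
      then have "(int r + 1) mod int n = 0" by simp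
      then have "g (z + 1) = f p" using m by (simp add: g_def)
      also have "\<dots> = f (Suc (p + r))"
      proof -
        have "Suc (p + r) = q" using \<open>r + 1 = n\<close> pq by (simp add: n_def)
        then show ?thesis using eq by simp
      qed
      finally show ?thesis .
    qed
    moreover have "g z = f (p + r)" by (simp add: g_def r_def)
    moreover have "p + r < q" using rn by (simp add: n_def)
    ultimately show ?thesis using f by simp
  qed
  then show ?thesis by blast
qed

lemma cycle_iff:
  assumes R: "\<And>j i. R j i \<Longrightarrow> j < m \<and> i < m" and mL: "m \<le> L"
  shows "(\<exists>j<L. Wk R L (Suc L) j) \<longleftrightarrow> (\<exists>g::int \<Rightarrow> nat. \<forall>z. R (g z) (g (z + 1)))"
proof
  assume "\<exists>j<L. Wk R L (Suc L) j"
  then obtain j where "Wk R L (Suc L) j" by blast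
  then obtain f where f: "\<forall>l<Suc L. R (f l) (f (Suc l))" using walk_extract by blast
  have sub: "f ` {..L} \<subseteq> {..<m}"
  proof
    fix x assume "x \<in> f ` {..L}"
    then obtain l where "l \<le> L" "x = f l" by auto
    then have "l < Suc L" by simp
    then have "R (f l) (f (Suc l))" using f by blast
    then show "x \<in> {..<m}" using R \<open>x = f l\<close> by blast
  qed
  have "\<not> inj_on f {..L}"
  proof
    assume "inj_on f {..L}"
    then have "card {..L} \<le> card {..<m}" using sub by (intro card_inj_on_le) auto
    then show False using mL by simp
  qed
  then obtain p q where pq: "p \<le> L" "q \<le> L" "p \<noteq> q" "f p = f q"
    unfolding inj_on_def by auto
  show "\<exists>g::int \<Rightarrow> nat. \<forall>z. R (g z) (g (z + 1))"
  proof (cases "p < q")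
    case True
    show ?thesis by (rule periodic_walk[of q R f p]) (use f pq True in auto)
  next
    case False
    then have "q < p" using pq by simp
    show ?thesis by (rule periodic_walk[of p R f q]) (use f pq \<open>q < p\<close> in auto)
  qed
next
  assume "\<exists>g::int \<Rightarrow> nat. \<forall>z. R (g z) (g (z + 1))"
  then obtain g :: "int \<Rightarrow> nat" where g: "\<forall>z. R (g z) (g (z + 1))" by blast
  have "Wk R L k (g z)" for k z
  proof (induction k arbitrary: z)
    case 0 then show ?case by simp
  next
    case (Suc k)
    have "g (z + 1) < L" using g[rule_format, of "z + 1"] R mL by fastforce
    then show ?case using g Suc.IH by auto
  qed
  moreover have "g 0 < L" using g[rule_format, of 0] R mL by fastforce
  ultimately show "\<exists>j<L. Wk R L (Suc L) j" by blast
qed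

lemma prod_decode_0: "prod_decode 0 = (0, 0)"
proof -
  have "prod_encode (0, 0) = 0" by (simp add: prod_encode_def)
  then show ?thesis by (metis prod_encode_inverse)
qed

lemma tlc_le: "tlc (list_encode xs) = list_encode (tl xs)"
  by (cases xs) (simp_all add: tlc_def prod_decode_0)

lemma hdc_le: "hdc (list_encode (x # xs)) = x"
  by (simp add: hdc_def)

lemma itv_le: "itv j (list_encode xs) = list_encode (drop j xs)"
proof (induction j)
  case 0 then show ?case by (simp add: itv_def)
next
  case (Suc j)
  have "itv (Suc j) (list_encode xs) = tlc (itv j (list_encode xs))" by (simp add: itv_def)
  also have "\<dots> = list_encode (drop (Suc j) xs)" using Suc.IH by (simp add: tlc_le drop_Suc tl_drop)
  finally show ?case .
qed

lemma list_encode_0: "list_encode xs = 0 \<longleftrightarrow> xs = []"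
  by (cases xs) auto

lemma nthv_le: "j < length xs \<Longrightarrow> nthv (list_encode xs) j = xs ! j"
  by (simp add: nthv_def itv_le Cons_nth_drop_Suc[symmetric] hdc_def)

lemma validv_le: "validv (list_encode xs) j = (if j < length xs then 1 else 0)"
  by (simp add: validv_def itv_le list_encode_0)

lemma length_le_encode: "length xs \<le> list_encode xs"
proof (induction xs)
  case Nil then show ?case by simp
next
  case (Cons x xs)
  have "list_encode xs \<le> prod_encode (x, list_encode xs)" by (rule le_prod_encode_2)
  then show ?case using Cons.IH by simp
qed

definition enc_e :: "nat \<times> nat \<times> nat \<Rightarrow> nat" where
  "enc_e = (\<lambda>(t, t', d). prod_encode (t, prod_encode (t', d)))"

definition RelE :: "z2 set \<Rightarrow> (nat \<times> nat \<times> nat) list \<Rightarrow> nat \<Rightarrow> nat \<Rightarrow> bool" where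
  "RelE D es j i \<longleftrightarrow> j < length es \<and> i < length es \<and> fst (snd (es ! j)) = fst (es ! i) \<and>
     dir_of (snd (snd (es ! j))) \<in> D \<and> dir_of (snd (snd (es ! i))) \<in> D \<and>
     dir_of (snd (snd (es ! i))) \<noteq> - dir_of (snd (snd (es ! j)))"

definition cfD :: "z2 set \<Rightarrow> nat \<Rightarrow> nat" where
  "cfD D d = (if dir_of d \<in> D then 1 else 0)"

lemma d4: "(d::nat) < 4 \<Longrightarrow> d = 0 \<or> d = 1 \<or> d = 2 \<or> d = 3" by auto

lemma inDv_cfD: "d < 4 \<Longrightarrow> inDv (cfD D) d = cfD D d"
  using d4[of d] by (auto simp: inDv_def)

lemma oppv_dir: "d < 4 \<Longrightarrow> e < 4 \<Longrightarrow> (oppv d e = 0) \<longleftrightarrow> dir_of e \<noteq> - dir_of d"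
  using d4[of d] d4[of e] by (auto simp: oppv_def dir_of_def gen_a_def gen_b_def)

lemma Rv_RelE:
  assumes "\<forall>(t, t', d) \<in> set es. d < 4"
  shows "Rv (cfD D) (list_encode (map enc_e es)) j i = (if RelE D es j i then 1 else 0)"
proof (cases "j < length es \<and> i < length es")
  case True
  let ?L = "list_encode (map enc_e es)"
  obtain t1 t1' d1 where e1: "es ! j = (t1, t1', d1)" by (cases "es ! j") auto
  obtain t2 t2' d2 where e2: "es ! i = (t2, t2', d2)" by (cases "es ! i") auto
  have d1: "d1 < 4" using assms True e1 nth_mem[of j es] by fastforce
  have d2: "d2 < 4" using assms True e2 nth_mem[of i es] by fastforce
  have n1: "nthv ?L j = prod_encode (t1, prod_encode (t1', d1))"
    using True e1 by (simp add: nthv_le enc_e_def)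
  have n2: "nthv ?L i = prod_encode (t2, prod_encode (t2', d2))"
    using True e2 by (simp add: nthv_le enc_e_def)
  show ?thesis using True e1 e2 n1 n2 d1 d2
    by (simp add: Rv_def RelE_def validv_le srcv_def tgtv_def dirv_def inDv_cfD oppv_dir cfD_def)
next
  case False
  then show ?thesis by (auto simp: Rv_def RelE_def validv_le)
qed

lemma step_bmask:
  assumes Rv: "\<And>j i. Rv cf L j i = (if R j i then 1 else 0)" and b: "\<forall>j<L. b j \<le> 1"
  shows "stepv cf (bmask b L) L = bmask (\<lambda>j. if \<exists>i<L. R j i \<and> b i = 1 then 1 else 0) L"
proof -
  have inner: "(\<Sum>i<L. Rv cf L j i * (bmask b L div 2 ^ i mod 2)) = 0 \<longleftrightarrow>
      \<not> (\<exists>i<L. R j i \<and> b i = 1)" for j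
  proof -
    have "(\<Sum>i<L. Rv cf L j i * (bmask b L div 2 ^ i mod 2)) = (\<Sum>i<L. (if R j i then 1 else 0) * b i)"
      by (rule sum.cong) (simp_all add: Rv bmask_bit[OF b])
    moreover have "(\<Sum>i<L. (if R j i then 1 else 0) * b i) = 0 \<longleftrightarrow> (\<forall>i<L. \<not> (R j i \<and> b i = 1))"
    proof -
      have "(\<Sum>i<L. (if R j i then 1 else 0) * b i) = 0 \<longleftrightarrow> (\<forall>i<L. (if R j i then 1 else 0) * b i = (0::nat))"
        by (auto simp: lessThan_iff)
      also have "\<dots> \<longleftrightarrow> (\<forall>i<L. \<not> (R j i \<and> b i = 1))"
        using b by (auto simp: le_Suc_eq)
      finally show ?thesis .
    qed
    ultimately show ?thesis by auto
  qed
  show ?thesis unfolding stepv_def bmask_def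
    by (rule sum.cong) (simp_all add: inner[unfolded bmask_def])
qed

lemma iter_bmask:
  assumes Rv: "\<And>j i. Rv cf L j i = (if R j i then 1 else 0)"
  shows "iterv cf k L = bmask (\<lambda>j. if Wk R L k j then 1 else 0) L"
proof (induction k)
  case 0 then show ?case using bmask_ones[of L] by (simp add: iterv_def)
next
  case (Suc k)
  have "iterv cf (Suc k) L = stepv cf (iterv cf k L) L" by (simp add: iterv_def)
  also have "\<dots> = bmask (\<lambda>j. if \<exists>i<L. R j i \<and> (if Wk R L k i then 1 else 0) = (1::nat) then 1 else 0) L"
    unfolding Suc.IH by (rule step_bmask[OF Rv]) simp
  also have "\<dots> = bmask (\<lambda>j. if Wk R L (Suc k) j then 1 else 0) L"
    by (rule arg_cong[where f="\<lambda>b. bmask b L"]) (auto intro!: ext)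
  finally show ?case .
qed

lemma main_correct:
  assumes Rv: "\<And>j i. Rv cf (snd (prod_decode c)) j i = (if R j i then 1 else 0)"
  shows "mainv cf c = (if \<exists>j<snd (prod_decode c). Wk R (snd (prod_decode c)) (Suc (snd (prod_decode c))) j
     then 1 else 0)"
  unfolding mainv_def iter_bmask[OF Rv] bmask_zero by auto

definition phi :: "z2 \<Rightarrow> z2 \<Rightarrow> int" where
  "phi g x = - (fst x * fst g + snd x * snd g)"

lemma gens_eq: "gens = {(1, 0), (0, 1), (-1, 0), (0, -1)}"
  by (simp add: gens_def gen_a_def gen_b_def)

lemma phi_01: "g \<in> gens \<Longrightarrow> d \<in> gens \<Longrightarrow> d \<noteq> g \<Longrightarrow> phi g d = 0 \<or> phi g d = 1"
  by (auto simp: gens_eq phi_def)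

lemma phi_0_eq: "g \<in> gens \<Longrightarrow> d \<in> gens \<Longrightarrow> d' \<in> gens \<Longrightarrow> phi g d = 0 \<Longrightarrow> phi g d' = 0 \<Longrightarrow>
   d' \<noteq> - d \<Longrightarrow> d' = d"
  by (auto simp: gens_eq phi_def)

lemma gens_nonzero: "d \<in> gens \<Longrightarrow> (0::nat) < n \<Longrightarrow> (int n * fst d, int n * snd d) \<noteq> (0, 0)"
  by (auto simp: gens_eq)

lemma phi_add: "phi g (a + b) = phi g a + phi g b"
  by (simp add: phi_def algebra_simps)

lemma phi_smul: "phi g (c * fst d, c * snd d) = c * phi g d"
  by (simp add: phi_def algebra_simps)

lemma no_reversal_inj:
  assumes DG: "D \<subseteq> gens" "D \<noteq> gens"
    and st: "\<And>i. \<delta> i \<in> D" and nr: "\<And>i. \<delta> (i + 1) \<noteq> - \<delta> i"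
    and om: "\<And>i. \<omega> (i + 1) = \<omega> i + \<delta> i"
  shows "inj (\<omega> :: int \<Rightarrow> z2)"
proof -
  obtain g where g: "g \<in> gens" "g \<notin> D" using DG by blast
  have dg: "\<delta> i \<in> gens" "\<delta> i \<noteq> g" for i using st DG g by auto
  have ph: "phi g (\<delta> i) = 0 \<or> phi g (\<delta> i) = 1" for i using phi_01[OF g(1) dg] .
  have P: "phi g (\<omega> (i + int n)) \<ge> phi g (\<omega> i) \<and>
      (phi g (\<omega> (i + int n)) = phi g (\<omega> i) \<longrightarrow>
        (\<forall>k<n. \<delta> (i + int k) = \<delta> i) \<and>
        \<omega> (i + int n) = \<omega> i + (int n * fst (\<delta> i), int n * snd (\<delta> i)))" for i n
  proof (induction n)
    case 0 then show ?case by (simp add: zero_prod_def)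
  next
    case (Suc n)
    have o: "\<omega> (i + int (Suc n)) = \<omega> (i + int n) + \<delta> (i + int n)"
    proof -
      have "i + int (Suc n) = i + int n + 1" by simp
      then show ?thesis using om[of "i + int n"] by (simp only:)
    qed
    have p: "phi g (\<omega> (i + int (Suc n))) = phi g (\<omega> (i + int n)) + phi g (\<delta> (i + int n))"
      unfolding o phi_add ..
    have ge: "phi g (\<delta> (i + int n)) \<ge> 0" using ph[of "i + int n"] by linarith
    show ?case
    proof (intro conjI impI)
      show "phi g (\<omega> i) \<le> phi g (\<omega> (i + int (Suc n)))" using p ge Suc.IH by linarith
    next
      assume eq: "phi g (\<omega> (i + int (Suc n))) = phi g (\<omega> i)"
      have eqn: "phi g (\<omega> (i + int n)) = phi g (\<omega> i)" and z: "phi g (\<delta> (i + int n)) = 0"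
        using p ge Suc.IH eq by linarith+
      have IH1: "\<forall>k<n. \<delta> (i + int k) = \<delta> i" and
        IH2: "\<omega> (i + int n) = \<omega> i + (int n * fst (\<delta> i), int n * snd (\<delta> i))"
        using Suc.IH eqn by auto
      have last: "\<delta> (i + int n) = \<delta> i"
      proof (cases n)
        case 0 then show ?thesis by simp
      next
        case (Suc m)
        have prev: "\<delta> (i + int m) = \<delta> i" using IH1 Suc by simp
        have "phi g (\<omega> (i + int n)) = phi g (\<omega> i) + int n * phi g (\<delta> i)"
          using IH2 by (simp add: phi_add phi_smul)
        then have "int n * phi g (\<delta> i) = 0" using eqn by simp
        then have z0: "phi g (\<delta> i) = 0" using Suc by simp
        have idx: "i + int n = i + int m + 1" using Suc by simp
        have "\<delta> (i + int m + 1) \<noteq> - \<delta> (i + int m)" by (rule nr)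
        then have "\<delta> (i + int n) \<noteq> - \<delta> i" unfolding idx prev .
        then show ?thesis using phi_0_eq[OF g(1) dg(1) dg(1) z0 z] by simp
      qed
      show "\<forall>k<Suc n. \<delta> (i + int k) = \<delta> i" using IH1 last by (auto simp: less_Suc_eq)
      show "\<omega> (i + int (Suc n)) = \<omega> i + (int (Suc n) * fst (\<delta> i), int (Suc n) * snd (\<delta> i))"
        unfolding o IH2 last by (cases "\<delta> i") (simp add: algebra_simps)
    qed
  qed
  show ?thesis
  proof (rule injI)
    fix a b assume ab: "\<omega> a = \<omega> b"
    show "a = b"
    proof (rule ccontr)
      assume "a \<noteq> b"
      then consider "a < b" | "b < a" by linarith
      then show False
      proof cases
        case 1
        define n where "n = nat (b - a)"
        have b: "b = a + int n" and n0: "0 < n" using 1 by (auto simp: n_def)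
        have "\<omega> b = \<omega> a + (int n * fst (\<delta> a), int n * snd (\<delta> a))" using P[of a n] ab b by auto
        then have "(int n * fst (\<delta> a), int n * snd (\<delta> a)) = 0" using ab by simp
        then show False using gens_nonzero[OF dg(1)[of a] n0] by (simp only: zero_prod_def)
      next
        case 2
        define n where "n = nat (a - b)"
        have b: "a = b + int n" and n0: "0 < n" using 2 by (auto simp: n_def)
        have "\<omega> a = \<omega> b + (int n * fst (\<delta> b), int n * snd (\<delta> b))" using P[of b n] ab b by auto
        then have "(int n * fst (\<delta> b), int n * snd (\<delta> b)) = 0" using ab by simp
        then show False using gens_nonzero[OF dg(1)[of b] n0] by (simp only: zero_prod_def)
      qed
    qed
  qed
qed

lemma omega_step:
  fixes \<delta> :: "int \<Rightarrow> z2"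
  shows "(\<Sum>k\<in>{0..<z+1}. \<delta> k) - (\<Sum>k\<in>{z+1..<0}. \<delta> k) =
         ((\<Sum>k\<in>{0..<z}. \<delta> k) - (\<Sum>k\<in>{z..<0}. \<delta> k)) + \<delta> z"
proof (cases "0 \<le> z")
  case True
  have e1: "{0..<z+1} = insert z {0..<z}" using True by auto
  have e2: "{z+1..<0} = {}" "{z..<0} = {}" using True by auto
  show ?thesis unfolding e1 e2 by (simp add: algebra_simps)
next
  case False
  have e1: "{0..<z+1} = {}" "{0..<z} = {}" using False by auto
  have e2: "{z..<0} = insert z {z+1..<0}" using False by auto
  show ?thesis unfolding e1 e2 by (simp add: algebra_simps)
qed

lemma edge_index:
  assumes "(a, b, s) \<in> edges_of es"
  shows "\<exists>j<length es. fst (es ! j) = a \<and> fst (snd (es ! j)) = b \<and> dir_of (snd (snd (es ! j))) = s"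
proof -
  obtain e where e0: "(a, b, s) = (\<lambda>(t, t', d). (t, t', dir_of d)) e" and e1: "e \<in> set es"
    using assms unfolding edges_of_def by (rule imageE)
  have e: "e \<in> set es" "(\<lambda>(t, t', d). (t, t', dir_of d)) e = (a, b, s)" using e0 e1 by simp_all
  obtain j where j: "j < length es" "es ! j = e" using e(1) by (auto simp: in_set_conv_nth)
  show ?thesis using j e(2) by (intro exI[of _ j]) (auto split: prod.splits)
qed

lemma snake_iff:
  assumes DG: "D \<subseteq> gens" "D \<noteq> gens" and tg: "tileset_graph (set ts) (edges_of es)"
  shows "has_snake_in D (set ts) (edges_of es) \<longleftrightarrow> (\<exists>g::int \<Rightarrow> nat. \<forall>z. RelE D es (g z) (g (z + 1)))"
proof
  assume "has_snake_in D (set ts) (edges_of es)"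
  then obtain \<omega> :: "int \<Rightarrow> z2" and \<zeta> :: "int \<Rightarrow> nat" where
    inj: "inj \<omega>" and st: "\<forall>i. \<omega> (i + 1) - \<omega> i \<in> gens \<and> \<omega> (i + 1) - \<omega> i \<in> D"
    and ed: "\<forall>i. (\<zeta> i, \<zeta> (i + 1), \<omega> (i + 1) - \<omega> i) \<in> edges_of es"
    unfolding has_snake_in_def by blast
  define P where "P z j \<longleftrightarrow> j < length es \<and> fst (es ! j) = \<zeta> z \<and> fst (snd (es ! j)) = \<zeta> (z + 1) \<and>
      dir_of (snd (snd (es ! j))) = \<omega> (z + 1) - \<omega> z" for z j
  have ex: "\<exists>j. P z j" for z using edge_index[OF ed[rule_format, of z]] unfolding P_def by blast
  define g where "g z = (SOME j. P z j)" for z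
  have Pg: "P z (g z)" for z unfolding g_def using ex by (rule someI_ex)
  have "RelE D es (g z) (g (z + 1))" for z
  proof -
    have nr: "\<omega> (z + 1 + 1) - \<omega> (z + 1) \<noteq> - (\<omega> (z + 1) - \<omega> z)"
    proof
      assume "\<omega> (z + 1 + 1) - \<omega> (z + 1) = - (\<omega> (z + 1) - \<omega> z)"
      then have "\<omega> (z + 1 + 1) = \<omega> z" by (simp add: algebra_simps)
      then have "z + 1 + 1 = z" by (rule injD[OF inj])
      then show False by simp
    qed
    have a: "g z < length es" "fst (snd (es ! g z)) = \<zeta> (z + 1)"
      "dir_of (snd (snd (es ! g z))) = \<omega> (z + 1) - \<omega> z" using Pg[of z] unfolding P_def by auto
    have b: "g (z + 1) < length es" "fst (es ! g (z + 1)) = \<zeta> (z + 1)"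
      "dir_of (snd (snd (es ! g (z + 1)))) = \<omega> (z + 1 + 1) - \<omega> (z + 1)"
      using Pg[of "z + 1"] unfolding P_def by auto
    have c: "\<omega> (z + 1) - \<omega> z \<in> D" "\<omega> (z + 1 + 1) - \<omega> (z + 1) \<in> D" using st by blast+
    show ?thesis unfolding RelE_def using a b c nr by simp
  qed
  then show "\<exists>g::int \<Rightarrow> nat. \<forall>z. RelE D es (g z) (g (z + 1))" by blast
next
  assume "\<exists>g::int \<Rightarrow> nat. \<forall>z. RelE D es (g z) (g (z + 1))"
  then obtain g :: "int \<Rightarrow> nat" where g: "\<And>z. RelE D es (g z) (g (z + 1))" by blast
  define \<zeta> where "\<zeta> z = fst (es ! g z)" for z
  define \<delta> where "\<delta> z = dir_of (snd (snd (es ! g z)))" for z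
  define \<omega> where "\<omega> z = (\<Sum>k\<in>{0..<z}. \<delta> k) - (\<Sum>k\<in>{z..<0}. \<delta> k)" for z
  have om: "\<omega> (z + 1) = \<omega> z + \<delta> z" for z unfolding \<omega>_def by (rule omega_step)
  have dD: "\<delta> z \<in> D" for z using g[of z] unfolding RelE_def \<delta>_def by auto
  have nr: "\<delta> (z + 1) \<noteq> - \<delta> z" for z using g[of z] unfolding RelE_def \<delta>_def by auto
  have inj: "inj \<omega>" by (rule no_reversal_inj[of D \<delta> \<omega>, OF DG dD nr om])
  have mem: "(\<zeta> z, \<zeta> (z + 1), \<delta> z) \<in> edges_of es" for z
  proof -
    have lt: "g z < length es" using g[of z] unfolding RelE_def by auto
    have eq: "fst (snd (es ! g z)) = \<zeta> (z + 1)" using g[of z] unfolding RelE_def \<zeta>_def by auto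
    have "es ! g z \<in> set es" using lt by simp
    then have "(\<lambda>(t, t', d). (t, t', dir_of d)) (es ! g z) \<in> edges_of es"
      unfolding edges_of_def by blast
    moreover have "(\<lambda>(t, t', d). (t, t', dir_of d)) (es ! g z) = (\<zeta> z, \<zeta> (z + 1), \<delta> z)"
      using eq unfolding \<zeta>_def \<delta>_def by (auto split: prod.splits)
    ultimately show ?thesis by simp
  qed
  have inA: "\<zeta> z \<in> set ts" for z using mem[of z] tg unfolding tileset_graph_def by fastforce
  have "\<delta> z \<in> gens" for z using dD DG by auto
  then show "has_snake_in D (set ts) (edges_of es)"
    unfolding has_snake_in_def
    using inj inA mem om dD by (intro exI[of _ \<omega>] exI[of _ \<zeta>]) simp
qed

lemma card_gens: "card gens = 4"
  by (simp add: gens_eq)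

theorem theorem2:
  fixes D :: "z2 set"
  assumes "D \<subseteq> gens" and "card D \<in> {2, 3}"
  shows "snake_problem_decidable D"
proof -
  have DG: "D \<noteq> gens" using assms(2) card_gens by auto
  show ?thesis unfolding snake_problem_decidable_def
  proof (intro exI[of _ "p_main (cfD D)"] allI impI)
    fix ts :: "nat list" and es :: "(nat \<times> nat \<times> nat) list"
    assume d4: "\<forall>(t, t', d)\<in>set es. d < 4" and tg: "tileset_graph (set ts) (edges_of es)"
    define c where "c = encode_instance ts es"
    define L where "L = list_encode (map enc_e es)"
    have cL: "snd (prod_decode c) = L"
      unfolding c_def L_def encode_instance_def enc_e_def by simp
    have ev: "rec_eval (p_main (cfD D)) [c] (mainv (cfD D) c)"
      using rfD[OF rf_main, of "[c]"] by simp
    have Rv: "\<And>j i. Rv (cfD D) (snd (prod_decode c)) j i = (if RelE D es j i then 1 else 0)"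
      unfolding cL L_def by (rule Rv_RelE[OF d4])
    have mv: "mainv (cfD D) c = (if \<exists>j<L. Wk (RelE D es) L (Suc L) j then 1 else 0)"
      using main_correct[OF Rv] unfolding cL .
    have mL: "length es \<le> L" unfolding L_def using length_le_encode[of "map enc_e es"] by simp
    have cyc: "(\<exists>j<L. Wk (RelE D es) L (Suc L) j) \<longleftrightarrow> (\<exists>g::int \<Rightarrow> nat. \<forall>z. RelE D es (g z) (g (z + 1)))"
      by (rule cycle_iff[OF _ mL]) (simp add: RelE_def)
    have fin: "mainv (cfD D) c = (if has_snake_in D (set ts) (edges_of es) then 1 else 0)"
      unfolding mv cyc snake_iff[OF assms(1) DG tg] ..
    show "rec_eval (p_main (cfD D)) [encode_instance ts es]
        (if has_snake_in D (set ts) (edges_of es) then 1 else 0)"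
      using ev[unfolded fin] unfolding c_def .
  qed
qed

end
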